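(* Let $(G,\mathcal{B}_1,\mathcal{B}_2)$ be a Rota-Baxter system of groups whose cocycle $\Phi(a)=\mathcal{B}_1(a)\mathcal{B}_2(a)$ is bijective. Then $\widetilde{\mathcal{B}}:G\to G$, $\widetilde{\mathcal{B}}(a)=\mathcal{B}_1(\Phi^{-1}(a))$, is a Rota-Baxter operator of weight $-1$, and $\mathcal{B}:G\to G$, $\mathcal{B}(a)=\mathcal{B}_2(\Phi^{-1}(a))^{-1}$, is a Rota-Baxter operator of weight $1$.
   Context: A Rota-Baxter system of groups is a triple $(G,\mathcal{B}_1,\mathcal{B}_2)$ where $G$ is a group and $\mathcal{B}_1,\mathcal{B}_2:G\to G$ are maps such that for all $a,b\in G$: $\mathcal{B}_1(a)\mathcal{B}_1(b)=\mathcal{B}_1(\mathcal{B}_1(a)b\mathcal{B}_2(a))$ and $\mathcal{B}_2(b)\mathcal{B}_2(a)=\mathcal{B}_2(\mathcal{B}_1(a)b\mathcal{B}_2(a))$. A map $\mathcal{B}:G\to G$ is a Rota-Baxter operator of weight $1$ if $\mathcal{B}(a)\mathcal{B}(b)=\mathcal{B}(a\mathcal{B}(a)b\mathcal{B}(a)^{-1})$ for all $a,b\in G$; a map $\mathcal{C}:G\to G$ is a Rota-Baxter operator of weight $-1$ if $\mathcal{C}(a)\mathcal{C}(b)=\mathcal{C}(\mathcal{C}(a)b\mathcal{C}(a)^{-1}a)$ for all $a,b\in G$. *)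

theory Defs
  imports "HOL-Algebra.Group"
begin

definition rb_system :: "('a, 'b) monoid_scheme \<Rightarrow> ('a \<Rightarrow> 'a) \<Rightarrow> ('a \<Rightarrow> 'a) \<Rightarrow> bool" where
  "rb_system G B1 B2 \<longleftrightarrow> group G \<and> B1 \<in> carrier G \<rightarrow> carrier G \<and> B2 \<in> carrier G \<rightarrow> carrier G \<and>
     (\<forall>a\<in>carrier G. \<forall>b\<in>carrier G.
        B1 a \<otimes>\<^bsub>G\<^esub> B1 b = B1 (B1 a \<otimes>\<^bsub>G\<^esub> b \<otimes>\<^bsub>G\<^esub> B2 a) \<and>
        B2 b \<otimes>\<^bsub>G\<^esub> B2 a = B2 (B1 a \<otimes>\<^bsub>G\<^esub> b \<otimes>\<^bsub>G\<^esub> B2 a))"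

definition rb_operator_weight_1 :: "('a, 'b) monoid_scheme \<Rightarrow> ('a \<Rightarrow> 'a) \<Rightarrow> bool" where
  "rb_operator_weight_1 G B \<longleftrightarrow> B \<in> carrier G \<rightarrow> carrier G \<and>
     (\<forall>a\<in>carrier G. \<forall>b\<in>carrier G.
        B a \<otimes>\<^bsub>G\<^esub> B b = B (a \<otimes>\<^bsub>G\<^esub> B a \<otimes>\<^bsub>G\<^esub> b \<otimes>\<^bsub>G\<^esub> inv\<^bsub>G\<^esub> (B a)))"

definition rb_operator_weight_neg1 :: "('a, 'b) monoid_scheme \<Rightarrow> ('a \<Rightarrow> 'a) \<Rightarrow> bool" where
  "rb_operator_weight_neg1 G C \<longleftrightarrow> C \<in> carrier G \<rightarrow> carrier G \<and>
     (\<forall>a\<in>carrier G. \<forall>b\<in>carrier G.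
        C a \<otimes>\<^bsub>G\<^esub> C b = C (C a \<otimes>\<^bsub>G\<^esub> b \<otimes>\<^bsub>G\<^esub> inv\<^bsub>G\<^esub> (C a) \<otimes>\<^bsub>G\<^esub> a))"

end

theory Submission
  imports Defs
begin

context group begin
lemma aux:
  fixes B1 B2 :: "'a \<Rightarrow> 'a"
  assumes "rb_system G B1 B2"
    and "bij_betw (\<lambda>a. B1 a \<otimes>\<^bsub>G\<^esub> B2 a) (carrier G) (carrier G)"
  shows "rb_operator_weight_neg1 G (\<lambda>a. B1 (inv_into (carrier G) (\<lambda>x. B1 x \<otimes>\<^bsub>G\<^esub> B2 x) a))
       \<and> rb_operator_weight_1 G (\<lambda>a. inv\<^bsub>G\<^esub> (B2 (inv_into (carrier G) (\<lambda>x. B1 x \<otimes>\<^bsub>G\<^esub> B2 x) a)))"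
proof -
  define P where "P = (\<lambda>x. B1 x \<otimes>\<^bsub>G\<^esub> B2 x)"
  define Q where "Q = inv_into (carrier G) P"
  have B1c: "\<And>x. x \<in> carrier G \<Longrightarrow> B1 x \<in> carrier G" and B2c: "\<And>x. x \<in> carrier G \<Longrightarrow> B2 x \<in> carrier G"
    using assms(1) unfolding rb_system_def by auto
  have r1: "\<And>a b. a \<in> carrier G \<Longrightarrow> b \<in> carrier G \<Longrightarrow> B1 a \<otimes> B1 b = B1 (B1 a \<otimes> b \<otimes> B2 a)"
   and r2: "\<And>a b. a \<in> carrier G \<Longrightarrow> b \<in> carrier G \<Longrightarrow> B2 b \<otimes> B2 a = B2 (B1 a \<otimes> b \<otimes> B2 a)"
    using assms(1) unfolding rb_system_def by auto
  have bij: "bij_betw P (carrier G) (carrier G)" using assms(2) P_def by simp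
  have Qc: "\<And>a. a \<in> carrier G \<Longrightarrow> Q a \<in> carrier G"
    using bij unfolding Q_def bij_betw_def by (metis inv_into_into)
  have PQ: "\<And>a. a \<in> carrier G \<Longrightarrow> P (Q a) = a"
    using bij unfolding Q_def bij_betw_def by (simp add: f_inv_into_f)
  have QP: "\<And>z. z \<in> carrier G \<Longrightarrow> Q (P z) = z"
    using bij unfolding Q_def bij_betw_def by (simp add: inv_into_f_f)
  have key: "\<And>a b. a \<in> carrier G \<Longrightarrow> b \<in> carrier G \<Longrightarrow>
     Q (B1 (Q a) \<otimes> b \<otimes> B2 (Q a)) = B1 (Q a) \<otimes> Q b \<otimes> B2 (Q a)"
  proof -
    fix a b assume a: "a \<in> carrier G" and b: "b \<in> carrier G"
    let ?x = "Q a" and ?y = "Q b"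
    have x: "?x \<in> carrier G" and y: "?y \<in> carrier G" using a b Qc by auto
    define z where "z = B1 ?x \<otimes> ?y \<otimes> B2 ?x"
    have z: "z \<in> carrier G" unfolding z_def using x y B1c B2c by auto
    have "P z = B1 ?x \<otimes> B1 ?y \<otimes> (B2 ?y \<otimes> B2 ?x)"
      unfolding P_def using r1[OF x y] r2[OF x y] z_def by simp
    also have "\<dots> = B1 ?x \<otimes> (B1 ?y \<otimes> B2 ?y) \<otimes> B2 ?x"
      using x y B1c B2c by (simp add: m_assoc)
    also have "\<dots> = B1 ?x \<otimes> b \<otimes> B2 ?x" using PQ[OF b] unfolding P_def by simp
    finally have "Q (B1 ?x \<otimes> b \<otimes> B2 ?x) = z" using QP[OF z] by simp
    thus "Q (B1 (Q a) \<otimes> b \<otimes> B2 (Q a)) = B1 (Q a) \<otimes> Q b \<otimes> B2 (Q a)" using z_def by simp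
  qed
  have A: "rb_operator_weight_neg1 G (\<lambda>a. B1 (Q a))"
    unfolding rb_operator_weight_neg1_def
  proof (intro conjI ballI)
    show "(\<lambda>a. B1 (Q a)) \<in> carrier G \<rightarrow> carrier G" using B1c Qc by auto
  next
    fix a b assume a: "a \<in> carrier G" and b: "b \<in> carrier G"
    have x: "Q a \<in> carrier G" using a Qc by auto
    have "B1 (Q a) \<otimes> b \<otimes> inv B1 (Q a) \<otimes> a = B1 (Q a) \<otimes> b \<otimes> B2 (Q a)"
    proof -
      have "a = B1 (Q a) \<otimes> B2 (Q a)" using PQ[OF a] unfolding P_def by simp
      hence "B1 (Q a) \<otimes> b \<otimes> inv B1 (Q a) \<otimes> a = B1 (Q a) \<otimes> b \<otimes> (inv B1 (Q a) \<otimes> (B1 (Q a) \<otimes> B2 (Q a)))"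
        using x b B1c B2c a by (metis m_assoc m_closed inv_closed)
      also have "\<dots> = B1 (Q a) \<otimes> b \<otimes> B2 (Q a)"
        using x B1c B2c by (simp add: m_assoc[symmetric])
      finally show ?thesis .
    qed
    thus "B1 (Q a) \<otimes> B1 (Q b) = B1 (Q (B1 (Q a) \<otimes> b \<otimes> inv B1 (Q a) \<otimes> a))"
      using key[OF a b] r1[OF x Qc[OF b]] by simp
  qed
  have B: "rb_operator_weight_1 G (\<lambda>a. inv (B2 (Q a)))"
    unfolding rb_operator_weight_1_def
  proof (intro conjI ballI)
    show "(\<lambda>a. inv (B2 (Q a))) \<in> carrier G \<rightarrow> carrier G" using B2c Qc by auto
  next
    fix a b assume a: "a \<in> carrier G" and b: "b \<in> carrier G"
    have x: "Q a \<in> carrier G" and y: "Q b \<in> carrier G" using a b Qc by auto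
    have "a \<otimes> inv (B2 (Q a)) \<otimes> b \<otimes> inv (inv (B2 (Q a))) = B1 (Q a) \<otimes> b \<otimes> B2 (Q a)"
    proof -
      have "a = B1 (Q a) \<otimes> B2 (Q a)" using PQ[OF a] unfolding P_def by simp
      moreover have "B1 (Q a) \<otimes> B2 (Q a) \<otimes> inv (B2 (Q a)) = B1 (Q a)"
        using x B1c B2c by (simp add: m_assoc)
      ultimately have "a \<otimes> inv (B2 (Q a)) = B1 (Q a)" by simp
      thus ?thesis using x B2c by simp
    qed
    moreover have "inv (B2 (Q a)) \<otimes> inv (B2 (Q b)) = inv (B2 (Q b) \<otimes> B2 (Q a))"
      using x y B2c by (simp add: inv_mult_group)
    ultimately show "inv (B2 (Q a)) \<otimes> inv (B2 (Q b)) = inv (B2 (Q (a \<otimes> inv (B2 (Q a)) \<otimes> b \<otimes> inv (inv (B2 (Q a))))))"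
      using key[OF a b] r2[OF x y] by simp
  qed
  show ?thesis using A B unfolding Q_def P_def by simp
qed

end

theorem proposition3p11:
  fixes G :: "('a, 'b) monoid_scheme" and B1 B2 :: "'a \<Rightarrow> 'a"
  assumes "rb_system G B1 B2"
    and "bij_betw (\<lambda>a. B1 a \<otimes>\<^bsub>G\<^esub> B2 a) (carrier G) (carrier G)"
  shows "rb_operator_weight_neg1 G (\<lambda>a. B1 (inv_into (carrier G) (\<lambda>x. B1 x \<otimes>\<^bsub>G\<^esub> B2 x) a))
       \<and> rb_operator_weight_1 G (\<lambda>a. inv\<^bsub>G\<^esub> (B2 (inv_into (carrier G) (\<lambda>x. B1 x \<otimes>\<^bsub>G\<^esub> B2 x) a)))"
  using group.aux[OF _ assms] assms(1) unfolding rb_system_def by blast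

end
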